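(* The $\varepsilon\tau$-calculi $\varepsilon\tau(\mathbf{H})$, $\varepsilon\tau(\mathbf{KC})$ and $\varepsilon\tau(\mathbf{LC})$ do not have the first $\varepsilon\tau$-theorem.
   Context: $\mathbf{H}$ is intuitionistic propositional logic; $\mathbf{KC}=\mathbf{H}+\lnot A\lor\lnot\lnot A$ (Jankov logic); $\mathbf{LC}=\mathbf{H}+(A\to B)\lor(B\to A)$ (infinite-valued Gödel logic). $\varepsilon\tau$-terms: $\varepsilon x\,A(x)$, $\tau x\,A(x)$. Critical formulas: $A(t)\to A(\varepsilon x\,A(x))$ and $A(\tau x\,A(x))\to A(t)$. $\vdash_{\varepsilon\tau(\mathbf{L})}B$: $B$ derivable in the quantifier-free first-order language with $\varepsilon\tau$-terms from critical formulas using substitution instances of theorems of $\mathbf{L}$ and modus ponens; $\vdash_{\mathbf{L}}$: the same without critical formulas. $\varepsilon\tau(\mathbf{L})$ has the first $\varepsilon\tau$-theorem if whenever $\vdash_{\varepsilon\tau(\mathbf{L})}A(e_1,\dots,e_n)$ for $\varepsilon$- or $\tau$-terms $e_i$, there are $\varepsilon\tau$-free terms $t_i^j$ with $\vdash_{\mathbf{L}}A(t_1^1,\dots,t_n^1)\lor\dots\lor A(t_1^k,\dots,t_n^k)$. *)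

theory Defs
  imports Main
begin

text \<open>Terms and formulas. Variables are de Bruijn indices; Eps A and Tau A bind
  index 0 in A. Function symbols and predicate symbols are indexed by nat.
  Negation is defined as implication to falsum.\<close>

datatype trm = Var nat | Fn nat "trm list" | Eps frm | Tau frm
and frm = FBot | Atom nat "trm list" | FImp frm frm | FAnd frm frm | FOr frm frm

definition FNeg :: "frm \<Rightarrow> frm" where "FNeg A = FImp A FBot"

primrec lift_t :: "nat \<Rightarrow> trm \<Rightarrow> trm" and lift_f :: "nat \<Rightarrow> frm \<Rightarrow> frm" where
  "lift_t k (Var i) = (if i < k then Var i else Var (Suc i))"
| "lift_t k (Fn f ts) = Fn f (map (lift_t k) ts)"
| "lift_t k (Eps A) = Eps (lift_f (Suc k) A)"
| "lift_t k (Tau A) = Tau (lift_f (Suc k) A)"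
| "lift_f k FBot = FBot"
| "lift_f k (Atom p ts) = Atom p (map (lift_t k) ts)"
| "lift_f k (FImp A B) = FImp (lift_f k A) (lift_f k B)"
| "lift_f k (FAnd A B) = FAnd (lift_f k A) (lift_f k B)"
| "lift_f k (FOr A B) = FOr (lift_f k A) (lift_f k B)"

primrec ssub_t :: "(nat \<Rightarrow> trm) \<Rightarrow> trm \<Rightarrow> trm" and ssub_f :: "(nat \<Rightarrow> trm) \<Rightarrow> frm \<Rightarrow> frm" where
  "ssub_t \<sigma> (Var i) = \<sigma> i"
| "ssub_t \<sigma> (Fn f ts) = Fn f (map (ssub_t \<sigma>) ts)"
| "ssub_t \<sigma> (Eps A) = Eps (ssub_f (\<lambda>i. case i of 0 \<Rightarrow> Var 0 | Suc j \<Rightarrow> lift_t 0 (\<sigma> j)) A)"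
| "ssub_t \<sigma> (Tau A) = Tau (ssub_f (\<lambda>i. case i of 0 \<Rightarrow> Var 0 | Suc j \<Rightarrow> lift_t 0 (\<sigma> j)) A)"
| "ssub_f \<sigma> FBot = FBot"
| "ssub_f \<sigma> (Atom p ts) = Atom p (map (ssub_t \<sigma>) ts)"
| "ssub_f \<sigma> (FImp A B) = FImp (ssub_f \<sigma> A) (ssub_f \<sigma> B)"
| "ssub_f \<sigma> (FAnd A B) = FAnd (ssub_f \<sigma> A) (ssub_f \<sigma> B)"
| "ssub_f \<sigma> (FOr A B) = FOr (ssub_f \<sigma> A) (ssub_f \<sigma> B)"

text \<open>A(t): instantiate the bound variable (index 0) of the body A by t,
  the other free variables of A are shifted down by one.\<close>

definition inst :: "frm \<Rightarrow> trm \<Rightarrow> frm" where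
  "inst A t = ssub_f (\<lambda>i. case i of 0 \<Rightarrow> t | Suc j \<Rightarrow> Var j) A"

definition inst_list :: "frm \<Rightarrow> trm list \<Rightarrow> frm" where
  "inst_list A es = ssub_f (\<lambda>i. if i < length es then es ! i else Var i) A"

primrec etfree_t :: "trm \<Rightarrow> bool" and etfree_f :: "frm \<Rightarrow> bool" where
  "etfree_t (Var i) = True"
| "etfree_t (Fn f ts) = list_all etfree_t ts"
| "etfree_t (Eps A) = False"
| "etfree_t (Tau A) = False"
| "etfree_f FBot = True"
| "etfree_f (Atom p ts) = list_all etfree_t ts"
| "etfree_f (FImp A B) = (etfree_f A \<and> etfree_f B)"
| "etfree_f (FAnd A B) = (etfree_f A \<and> etfree_f B)"
| "etfree_f (FOr A B) = (etfree_f A \<and> etfree_f B)"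

definition is_eps_tau :: "trm \<Rightarrow> bool" where
  "is_eps_tau t \<longleftrightarrow> (\<exists>A. t = Eps A \<or> t = Tau A)"

fun BigOr :: "frm list \<Rightarrow> frm" where
  "BigOr [] = FBot"
| "BigOr [A] = A"
| "BigOr (A # As) = FOr A (BigOr As)"

datatype pform = PVar nat | PBot | PImp pform pform | PAnd pform pform | POr pform pform

definition PNeg :: "pform \<Rightarrow> pform" where "PNeg A = PImp A PBot"

inductive Hthm :: "(pform \<Rightarrow> bool) \<Rightarrow> pform \<Rightarrow> bool" for Ax where
  K: "Hthm Ax (PImp A (PImp B A))"
| S: "Hthm Ax (PImp (PImp A (PImp B C)) (PImp (PImp A B) (PImp A C)))"
| conjE1: "Hthm Ax (PImp (PAnd A B) A)"
| conjE2: "Hthm Ax (PImp (PAnd A B) B)"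
| conjI: "Hthm Ax (PImp A (PImp B (PAnd A B)))"
| disjI1: "Hthm Ax (PImp A (POr A B))"
| disjI2: "Hthm Ax (PImp B (POr A B))"
| disjE: "Hthm Ax (PImp (PImp A C) (PImp (PImp B C) (PImp (POr A B) C)))"
| efq: "Hthm Ax (PImp PBot A)"
| ax: "Ax A \<Longrightarrow> Hthm Ax A"
| mp: "Hthm Ax (PImp A B) \<Longrightarrow> Hthm Ax A \<Longrightarrow> Hthm Ax B"

definition logicH :: "pform \<Rightarrow> bool" where
  "logicH = Hthm (\<lambda>_. False)"

definition logicKC :: "pform \<Rightarrow> bool" where
  "logicKC = Hthm (\<lambda>F. \<exists>A. F = POr (PNeg A) (PNeg (PNeg A)))"

definition logicLC :: "pform \<Rightarrow> bool" where
  "logicLC = Hthm (\<lambda>F. \<exists>A B. F = POr (PImp A B) (PImp B A))"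

primrec pinst :: "(nat \<Rightarrow> frm) \<Rightarrow> pform \<Rightarrow> frm" where
  "pinst \<sigma> (PVar n) = \<sigma> n"
| "pinst \<sigma> PBot = FBot"
| "pinst \<sigma> (PImp A B) = FImp (pinst \<sigma> A) (pinst \<sigma> B)"
| "pinst \<sigma> (PAnd A B) = FAnd (pinst \<sigma> A) (pinst \<sigma> B)"
| "pinst \<sigma> (POr A B) = FOr (pinst \<sigma> A) (pinst \<sigma> B)"

inductive et_deriv :: "(pform \<Rightarrow> bool) \<Rightarrow> frm \<Rightarrow> bool" for L where
  taut: "L P \<Longrightarrow> et_deriv L (pinst \<sigma> P)"
| crit_eps: "et_deriv L (FImp (inst A t) (inst A (Eps A)))"
| crit_tau: "et_deriv L (FImp (inst A (Tau A)) (inst A t))"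
| mp: "et_deriv L (FImp A B) \<Longrightarrow> et_deriv L A \<Longrightarrow> et_deriv L B"

inductive L_deriv :: "(pform \<Rightarrow> bool) \<Rightarrow> frm \<Rightarrow> bool" for L where
  taut: "L P \<Longrightarrow> L_deriv L (pinst \<sigma> P)"
| mp: "L_deriv L (FImp A B) \<Longrightarrow> L_deriv L A \<Longrightarrow> L_deriv L B"

definition first_et_theorem :: "(pform \<Rightarrow> bool) \<Rightarrow> bool" where
  "first_et_theorem L \<longleftrightarrow>
     (\<forall>A es. etfree_f A \<and> (\<forall>e\<in>set es. is_eps_tau e) \<and> et_deriv L (inst_list A es) \<longrightarrow>
        (\<exists>tss. tss \<noteq> [] \<and>
               (\<forall>ts\<in>set tss. length ts = length es \<and> (\<forall>t\<in>set ts. etfree_t t)) \<and>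
               L_deriv L (BigOr (map (inst_list A) tss))))"

end

theory Submission
  imports Defs Complex_Main
begin

definition gimp :: "real \<Rightarrow> real \<Rightarrow> real" where
  "gimp x y = (if x \<le> y then 1 else y)"

primrec peval :: "(nat \<Rightarrow> real) \<Rightarrow> pform \<Rightarrow> real" where
  "peval v (PVar n) = v n"
| "peval v PBot = 0"
| "peval v (PImp A B) = gimp (peval v A) (peval v B)"
| "peval v (PAnd A B) = min (peval v A) (peval v B)"
| "peval v (POr A B) = max (peval v A) (peval v B)"

primrec feval :: "frm \<Rightarrow> real" where
  "feval FBot = 0"
| "feval (Atom p ts) = 1 / (2 + real (size (Atom p ts)))"
| "feval (FImp A B) = gimp (feval A) (feval B)"
| "feval (FAnd A B) = min (feval A) (feval B)"
| "feval (FOr A B) = max (feval A) (feval B)"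

lemma feval_range: "0 \<le> feval F \<and> feval F \<le> 1"
  by (induction F) (auto simp: gimp_def field_simps)

lemma peval_range: "(\<forall>n. 0 \<le> v n \<and> v n \<le> 1) \<Longrightarrow> 0 \<le> peval v P \<and> peval v P \<le> 1"
  by (induction P) (auto simp: gimp_def)

lemma feval_pinst: "feval (pinst \<sigma> P) = peval (\<lambda>n. feval (\<sigma> n)) P"
  by (induction P) auto

lemma sound:
  assumes axv: "\<And>A v. Ax A \<Longrightarrow> (\<forall>n. 0 \<le> v n \<and> v n \<le> 1) \<Longrightarrow> peval v A = 1"
  shows "Hthm Ax P \<Longrightarrow> (\<forall>n. 0 \<le> v n \<and> v n \<le> 1) \<Longrightarrow> peval v P = 1"
proof (induction rule: Hthm.induct)
  case (K A B)
  then show ?case using peval_range[of v A] peval_range[of v B] by (auto simp: gimp_def)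
next
  case (S A B C)
  then show ?case using peval_range[of v A] peval_range[of v B] peval_range[of v C]
    by (auto simp: gimp_def)
next
  case (conjE1 A B)
  then show ?case by (auto simp: gimp_def)
next
  case (conjE2 A B)
  then show ?case by (auto simp: gimp_def)
next
  case (conjI A B)
  then show ?case using peval_range[of v A] peval_range[of v B] by (auto simp: gimp_def)
next
  case (disjI1 A B)
  then show ?case by (auto simp: gimp_def)
next
  case (disjI2 B A)
  then show ?case by (auto simp: gimp_def)
next
  case (disjE A C B)
  then show ?case using peval_range[of v A] peval_range[of v B] peval_range[of v C]
    by (auto simp: gimp_def)
next
  case (efq A)
  then show ?case using peval_range[of v A] by (auto simp: gimp_def)
next
  case (ax A)
  then show ?case using axv by blast
next
  case (mp A B)
  then show ?case using peval_range[of v B] by (auto simp: gimp_def split: if_splits)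
qed

lemma L_sound:
  assumes "\<And>P v. L P \<Longrightarrow> (\<forall>n. 0 \<le> v n \<and> v n \<le> 1) \<Longrightarrow> peval v P = 1"
  shows "L_deriv L F \<Longrightarrow> feval F = 1"
proof (induction rule: L_deriv.induct)
  case (taut P \<sigma>)
  then show ?case using assms[of P "\<lambda>n. feval (\<sigma> n)"] feval_range by (simp add: feval_pinst)
next
  case (mp A B)
  then show ?case using feval_range[of B] by (auto simp: gimp_def split: if_splits)
qed

lemma H_valid: "logicH P \<Longrightarrow> (\<forall>n. 0 \<le> v n \<and> v n \<le> 1) \<Longrightarrow> peval v P = 1"
  unfolding logicH_def by (rule sound) auto

lemma KC_valid: "logicKC P \<Longrightarrow> (\<forall>n. 0 \<le> v n \<and> v n \<le> 1) \<Longrightarrow> peval v P = 1"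
  unfolding logicKC_def
proof (rule sound)
  fix A and v :: "nat \<Rightarrow> real" assume "\<exists>B. A = POr (PNeg B) (PNeg (PNeg B))" "\<forall>n. 0 \<le> v n \<and> v n \<le> 1"
  then obtain B where "A = POr (PNeg B) (PNeg (PNeg B))" by blast
  then show "peval v A = 1" using peval_range[of v B] \<open>\<forall>n. _\<close>
    by (auto simp: gimp_def PNeg_def)
qed

lemma LC_valid: "logicLC P \<Longrightarrow> (\<forall>n. 0 \<le> v n \<and> v n \<le> 1) \<Longrightarrow> peval v P = 1"
  unfolding logicLC_def
proof (rule sound)
  fix A and v :: "nat \<Rightarrow> real" assume "\<exists>B C. A = POr (PImp B C) (PImp C B)" "\<forall>n. 0 \<le> v n \<and> v n \<le> 1"
  then obtain B C where "A = POr (PImp B C) (PImp C B)" by blast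
  then show "peval v A = 1" using peval_range[of v B] peval_range[of v C] \<open>\<forall>n. _\<close>
    by (auto simp: gimp_def)
qed

definition AA :: frm where "AA = FImp (Atom 0 [Var 0]) (Atom 0 [Fn 0 [Var 0]])"
definition EE :: trm where "EE = Tau (Atom 0 [Var 0])"

lemma inst_AA: "inst_list AA [t] = FImp (Atom 0 [t]) (Atom 0 [Fn 0 [t]])"
  by (simp add: inst_list_def AA_def)

lemma deriv_AA: "et_deriv L (inst_list AA [EE])"
proof -
  have "et_deriv L (FImp (inst (Atom 0 [Var 0]) (Tau (Atom 0 [Var 0])))
          (inst (Atom 0 [Var 0]) (Fn 0 [EE])))"
    by (rule et_deriv.crit_tau)
  then show ?thesis by (simp add: inst_AA inst_def EE_def)
qed

lemma feval_inst_AA: "feval (inst_list AA [t]) < 1"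
  by (simp add: inst_AA gimp_def field_simps)

lemma BigOr_lt: "(\<forall>F\<in>set Fs. feval F < 1) \<Longrightarrow> feval (BigOr Fs) < 1"
  by (induction Fs rule: BigOr.induct) auto

lemma not_first:
  assumes "\<And>P v. L P \<Longrightarrow> (\<forall>n. 0 \<le> v n \<and> v n \<le> 1) \<Longrightarrow> peval v P = 1"
  shows "\<not> first_et_theorem L"
proof
  assume "first_et_theorem L"
  moreover have "etfree_f AA" by (simp add: AA_def)
  moreover have "\<forall>e\<in>set [EE]. is_eps_tau e" by (simp add: is_eps_tau_def EE_def)
  ultimately obtain tss where tss: "\<forall>ts\<in>set tss. length ts = 1"
    and d: "L_deriv L (BigOr (map (inst_list AA) tss))"
    unfolding first_et_theorem_def using deriv_AA by fastforce
  have "\<forall>F\<in>set (map (inst_list AA) tss). feval F < 1"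
  proof
    fix F assume "F \<in> set (map (inst_list AA) tss)"
    then obtain ts where "ts \<in> set tss" "F = inst_list AA ts" by auto
    moreover then obtain t where "ts = [t]" using tss
      by (metis One_nat_def length_0_conv length_Suc_conv)
    ultimately show "feval F < 1" using feval_inst_AA by simp
  qed
  then have "feval (BigOr (map (inst_list AA) tss)) < 1" by (rule BigOr_lt)
  moreover have "feval (BigOr (map (inst_list AA) tss)) = 1"
    using L_sound[OF assms d] .
  ultimately show False by simp
qed

theorem mainTheorem10:
  shows "\<not> first_et_theorem logicH \<and> \<not> first_et_theorem logicKC \<and> \<not> first_et_theorem logicLC"
  using not_first[OF H_valid] not_first[OF KC_valid] not_first[OF LC_valid] by blast

end
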